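(* Let $(L,\vee,\wedge,0,1)$ be a complemented modular lattice with $0\ne1$ and $a,b\in L$. Then: (i) $\{a\}\wedge(a\to b)=\{a\wedge b\}$ (and $a\wedge b\le b$); (ii) if $a^+\le b^+$ then $(a\to b)\wedge b^+=a^+$; (iii) if $c\in a\to b$ then $a\to c=a\to b$; (iv) $a\to(a\to b)=a\to b$; (v) if $a^+\le \{b\}$ then $a\to b=\{b\}$.
   Context: For $a\in L$, $a^+:=\{x\in L\mid a\vee x=1,\ a\wedge x=0\}$ (the set of all complements of $a$). For $A,B\subseteq L$: $A\vee B:=\{x\vee y\mid x\in A,y\in B\}$, $A\wedge B:=\{x\wedge y\mid x\in A,y\in B\}$, and $A\le B$ means $x\le y$ for all $x\in A$ and all $y\in B$. For $a,b\in L$, $a\to b:=a^+\vee\{a\wedge b\}$, and for $A\subseteq L$, $a\to A:=\{a\}^+\vee(\{a\}\wedge A)=\{x\vee(a\wedge y)\mid x\in a^+,y\in A\}$. *)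

theory Defs
  imports Main
begin

class cm_lattice = bounded_lattice +
  assumes modular: "x \<le> z \<Longrightarrow> sup x (inf y z) = inf (sup x y) z"
  assumes complemented: "\<exists>y. sup x y = top \<and> inf x y = bot"
  assumes bot_neq_top: "bot \<noteq> top"

definition compls :: "'a::bounded_lattice \<Rightarrow> 'a set" where
  "compls a = {x. sup a x = top \<and> inf a x = bot}"

definition set_sup :: "'a::lattice set \<Rightarrow> 'a set \<Rightarrow> 'a set" where
  "set_sup A B = {sup x y | x y. x \<in> A \<and> y \<in> B}"

definition set_inf :: "'a::lattice set \<Rightarrow> 'a set \<Rightarrow> 'a set" where
  "set_inf A B = {inf x y | x y. x \<in> A \<and> y \<in> B}"

definition set_le :: "'a::order set \<Rightarrow> 'a set \<Rightarrow> bool" where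
  "set_le A B \<longleftrightarrow> (\<forall>x\<in>A. \<forall>y\<in>B. x \<le> y)"

definition imp :: "'a::bounded_lattice \<Rightarrow> 'a \<Rightarrow> 'a set" where
  "imp a b = set_sup (compls a) {inf a b}"

definition imp_set :: "'a::bounded_lattice \<Rightarrow> 'a set \<Rightarrow> 'a set" where
  "imp_set a A = set_sup (compls a) (set_inf {a} A)"

end

theory Submission
  imports Defs
begin

lemma key1:
  fixes a b x :: "'a::cm_lattice"
  assumes "x \<in> compls a"
  shows "inf a (sup x (inf a b)) = inf a b"
proof -
  have m: "sup (inf a b) (inf x a) = inf (sup (inf a b) x) a"
    by (rule modular) simp
  have "inf x a = bot" using assms by (simp add: compls_def inf_commute)
  with m show ?thesis by (simp add: sup_commute inf_commute)
qed

lemma compls_ne: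
  fixes a :: "'a::cm_lattice"
  shows "\<exists>x. x \<in> compls a"
  using complemented[of a] by (auto simp: compls_def)

lemma imp_eq: "imp a b = {sup x (inf a b) | x. x \<in> compls a}"
  by (auto simp: imp_def set_sup_def)

lemma p1:
  fixes a b :: "'a::cm_lattice"
  shows "set_inf {a} (imp a b) = {inf a b}"
proof -
  obtain x where x: "x \<in> compls a" using compls_ne by blast
  have w: "sup x (inf a b) \<in> imp a b" using x unfolding imp_eq by blast
  have e: "inf a b = inf a (sup x (inf a b))" using key1[OF x] by simp
  have "inf a b \<in> set_inf {a} (imp a b)" unfolding set_inf_def
    using w e by blast
  moreover have "z = inf a b" if zin: "z \<in> set_inf {a} (imp a b)" for z
  proof -
    obtain y where "y \<in> imp a b" "z = inf a y" using zin unfolding set_inf_def by blast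
    then obtain x' where "x' \<in> compls a" "y = sup x' (inf a b)" unfolding imp_eq by blast
    then show ?thesis using key1[of x' a b] \<open>z = inf a y\<close> by simp
  qed
  ultimately show ?thesis by blast
qed

lemma p2:
  fixes a b :: "'a::cm_lattice"
  assumes "set_le (compls a) (compls b)"
  shows "set_inf (imp a b) (compls b) = compls a"
proof -
  have k: "inf (sup x (inf a b)) y = x" if "x \<in> compls a" "y \<in> compls b" for x y
  proof -
    have le: "x \<le> y" using assms that unfolding set_le_def by blast
    have "sup x (inf (inf a b) y) = inf (sup x (inf a b)) y" by (rule modular[OF le])
    moreover have "inf (inf a b) y = bot"
    proof -
      have "inf b y = bot" using that(2) by (simp add: compls_def)
      then have "inf a (inf b y) = bot" by simp
      then show ?thesis by (simp add: inf.assoc)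
    qed
    ultimately show ?thesis by simp
  qed
  obtain y where "y \<in> compls b" using compls_ne by blast
  show ?thesis
  proof (rule set_eqI, rule iffI)
    fix z assume "z \<in> set_inf (imp a b) (compls b)"
    then obtain w y' where w: "w \<in> imp a b" and y': "y' \<in> compls b" and zw: "z = inf w y'"
      unfolding set_inf_def by blast
    from w obtain x where x: "x \<in> compls a" and wx: "w = sup x (inf a b)" unfolding imp_eq by blast
    show "z \<in> compls a" using k[OF x y'] zw wx x by simp
  next
    fix z assume z: "z \<in> compls a"
    have "z = inf (sup z (inf a b)) y" using k[OF z \<open>y \<in> compls b\<close>] by simp
    moreover have "sup z (inf a b) \<in> imp a b" using z unfolding imp_eq by blast
    ultimately show "z \<in> set_inf (imp a b) (compls b)"
      using \<open>y \<in> compls b\<close> unfolding set_inf_def by blast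
  qed
qed

lemma p3:
  fixes a b c :: "'a::cm_lattice"
  assumes "c \<in> imp a b"
  shows "imp a c = imp a b"
proof -
  obtain x0 where "x0 \<in> compls a" "c = sup x0 (inf a b)" using assms by (auto simp: imp_eq)
  then have "inf a c = inf a b" using key1 by blast
  then show ?thesis by (simp add: imp_eq)
qed

lemma p4:
  fixes a b :: "'a::cm_lattice"
  shows "imp_set a (imp a b) = imp a b"
  unfolding imp_set_def p1 by (simp add: imp_def)

lemma p5:
  fixes a b :: "'a::cm_lattice"
  assumes "set_le (compls a) {b}"
  shows "imp a b = {b}"
proof -
  have k: "sup x (inf a b) = b" if "x \<in> compls a" for x
  proof -
    have le: "x \<le> b" using assms that unfolding set_le_def by blast
    have "sup x (inf a b) = inf (sup x a) b" by (rule modular[OF le])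
    moreover have "sup x a = top" using that by (simp add: compls_def sup_commute)
    ultimately show ?thesis by simp
  qed
  obtain x where x: "x \<in> compls a" using compls_ne by blast
  show ?thesis
  proof (rule set_eqI, rule iffI)
    fix z assume "z \<in> imp a b"
    then obtain x' where "x' \<in> compls a" "z = sup x' (inf a b)" unfolding imp_eq by blast
    then show "z \<in> {b}" using k by simp
  next
    fix z assume "z \<in> {b}"
    then have "z = sup x (inf a b)" using k[OF x] by simp
    then show "z \<in> imp a b" using x unfolding imp_eq by blast
  qed
qed

theorem theorem4:
  fixes a b :: "'a::cm_lattice"
  shows "(set_inf {a} (imp a b) = {inf a b} \<and> inf a b \<le> b)
    \<and> (set_le (compls a) (compls b) \<longrightarrow> set_inf (imp a b) (compls b) = compls a)
    \<and> (\<forall>c. c \<in> imp a b \<longrightarrow> imp a c = imp a b)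
    \<and> imp_set a (imp a b) = imp a b
    \<and> (set_le (compls a) {b} \<longrightarrow> imp a b = {b})"
proof (intro conjI allI impI)
  show "set_inf {a} (imp a b) = {inf a b}" by (rule p1)
  show "inf a b \<le> b" by simp
  show "set_inf (imp a b) (compls b) = compls a" if "set_le (compls a) (compls b)"
    using p2 that by blast
  show "imp a c = imp a b" if "c \<in> imp a b" for c using p3 that by blast
  show "imp_set a (imp a b) = imp a b" by (rule p4)
  show "imp a b = {b}" if "set_le (compls a) {b}" using p5 that by blast
qed

end
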